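(* Let $k\in\mathbb{N}$, let $P$ be the path $x_1,x_2,\dots,x_{2k+1}$, let $m\ge 3$, and let $L$ be an $m$-assignment for $P$. For $c\in L(x_1)$ and $d\in L(x_{2k+1})$ let $N(c,d)$ be the number of proper $L$-colorings of $P$ in which $x_1$ is colored $c$ and $x_{2k+1}$ is colored $d$. Then for every $(c,d)\in L(x_1)\times L(x_{2k+1})$, \[\frac{(m-1)^{2k+1}-(m-1)}{m(m-1)}\le N(c,d).\] Furthermore, there exist at least $m$ pairs $(y,z)\in L(x_1)\times L(x_{2k+1})$ such that \[\frac{(m-1)^{2k+1}-(m-1)}{m(m-1)}+1=\frac{(m-1)^{2k}+(m-1)}{m}\le N(y,z).\]
   Context: An $m$-assignment $L$ assigns to each vertex $x$ a set $L(x)$ of $m$ colors; a proper $L$-coloring is a proper coloring $f$ with $f(x)\in L(x)$ for every vertex $x$. *)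

theory Defs
  imports Complex_Main "HOL-Library.FuncSet"
begin

(* The path P = x_1, ..., x_n with vertices represented by the indices 1..n;
   edges are {i, i+1} for 1 <= i < n. *)

definition proper_L_colorings :: "nat \<Rightarrow> (nat \<Rightarrow> 'c set) \<Rightarrow> (nat \<Rightarrow> 'c) set" where
  "proper_L_colorings n L =
     {f \<in> Pi\<^sub>E {1..n} L. \<forall>i. 1 \<le> i \<and> i < n \<longrightarrow> f i \<noteq> f (Suc i)}"

definition N_path :: "nat \<Rightarrow> (nat \<Rightarrow> 'c set) \<Rightarrow> 'c \<Rightarrow> 'c \<Rightarrow> nat" where
  "N_path n L c d = card {f \<in> proper_L_colorings n L. f 1 = c \<and> f n = d}"

end

theory Submission
  imports Defs
begin


lemma N_rec:
  assumes n: "1 \<le> n" and fin: "\<forall>i\<in>{1..Suc n}. finite (L i)" and d: "d \<in> L (Suc n)"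
  shows "N_path (Suc n) L c d = (\<Sum>e\<in>L n - {d}. N_path n L c e)"
proof -
  define B where "B e = {g \<in> proper_L_colorings n L. g 1 = c \<and> g n = e}" for e
  define A where "A = {f \<in> proper_L_colorings (Suc n) L. f 1 = c \<and> f (Suc n) = d}"
  have eqA: "A = (\<lambda>g. g(Suc n := d)) ` (\<Union>e\<in>L n - {d}. B e)"
  proof
    show "A \<subseteq> (\<lambda>g. g(Suc n := d)) ` (\<Union>e\<in>L n - {d}. B e)"
    proof
      fix f assume f: "f \<in> A"
      define g where "g = f(Suc n := undefined)"
      have fP: "f \<in> Pi\<^sub>E {1..Suc n} L" and fpr: "\<forall>i. 1 \<le> i \<and> i < Suc n \<longrightarrow> f i \<noteq> f (Suc i)"
        and f1: "f 1 = c" and fd: "f (Suc n) = d"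
        using f by (auto simp: A_def proper_L_colorings_def)
      have gP: "g \<in> Pi\<^sub>E {1..n} L" using fP unfolding g_def PiE_iff extensional_def by auto
      have "g \<in> B (f n)" unfolding B_def proper_L_colorings_def using gP fpr f1 n
        by (auto simp: g_def)
      moreover have "f n \<in> L n - {d}" using fP fpr n fd by (auto simp: PiE_iff)
      moreover have "f = g(Suc n := d)" using fd by (auto simp: g_def)
      ultimately show "f \<in> (\<lambda>g. g(Suc n := d)) ` (\<Union>e\<in>L n - {d}. B e)" by blast
    qed
  next
    show "(\<lambda>g. g(Suc n := d)) ` (\<Union>e\<in>L n - {d}. B e) \<subseteq> A"
    proof
      fix f assume "f \<in> (\<lambda>g. g(Suc n := d)) ` (\<Union>e\<in>L n - {d}. B e)"
      then obtain g e where e: "e \<in> L n - {d}" and g: "g \<in> B e" and fg: "f = g(Suc n := d)" by blast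
      have gP: "g \<in> Pi\<^sub>E {1..n} L" and gpr: "\<forall>i. 1 \<le> i \<and> i < n \<longrightarrow> g i \<noteq> g (Suc i)"
        and g1: "g 1 = c" and gn: "g n = e"
        using g by (auto simp: B_def proper_L_colorings_def)
      have "f \<in> Pi\<^sub>E {1..Suc n} L" using gP d unfolding fg PiE_iff extensional_def
        by (auto simp: le_Suc_eq)
      moreover have "\<forall>i. 1 \<le> i \<and> i < Suc n \<longrightarrow> f i \<noteq> f (Suc i)"
        using gpr gn e by (auto simp: fg less_Suc_eq)
      ultimately show "f \<in> A" using g1 n by (auto simp: A_def proper_L_colorings_def fg)
    qed
  qed
  have inj: "inj_on (\<lambda>g. g(Suc n := d)) (\<Union>e\<in>L n - {d}. B e)"
  proof (rule inj_onI)
    fix g h assume g: "g \<in> (\<Union>e\<in>L n - {d}. B e)" and h: "h \<in> (\<Union>e\<in>L n - {d}. B e)"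
      and eq: "g(Suc n := d) = h(Suc n := d)"
    have "g \<in> extensional {1..n}" "h \<in> extensional {1..n}"
      using g h by (auto simp: B_def proper_L_colorings_def PiE_iff)
    then have "g (Suc n) = h (Suc n)" by (simp add: extensional_def)
    then show "g = h" using eq by (metis fun_upd_triv fun_upd_upd)
  qed
  have finB: "finite (B e)" for e
  proof -
    have "finite (Pi\<^sub>E {1..n} L)" using fin by (intro finite_PiE) auto
    then show ?thesis unfolding B_def proper_L_colorings_def by (rule rev_finite_subset) auto
  qed
  have "card A = card (\<Union>e\<in>L n - {d}. B e)" using eqA inj by (simp add: card_image)
  also have "\<dots> = (\<Sum>e\<in>L n - {d}. card (B e))"
    using fin n finB by (intro card_UN_disjoint) (auto simp: B_def)
  finally show ?thesis by (simp add: N_path_def A_def B_def)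
qed

lemma N_base: "N_path 1 L c e = (if c = e \<and> c \<in> L 1 then 1 else 0)"
proof -
  have "{f \<in> proper_L_colorings 1 L. f 1 = c \<and> f 1 = e} =
        (if c = e \<and> c \<in> L 1 then {(\<lambda>x. undefined)(1 := c)} else {})"
    by (auto simp: proper_L_colorings_def PiE_iff extensional_def)
  then show ?thesis by (auto simp: N_path_def)
qed



lemma T_bound:
  assumes "1 \<le> n" and "\<forall>i\<in>{1..n}. finite (L i) \<and> card (L i) = m" and c: "c \<in> L 1"
  shows "(m-1)^(n-1) \<le> (\<Sum>e\<in>L n. N_path n L c e)"
  using assms(1,2)
proof (induction n rule: nat_induct_at_least)
  case base
  have "(\<Sum>e\<in>L 1. N_path 1 L c e) = (\<Sum>e\<in>L 1. if e = c then 1 else 0)"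
    using c by (intro sum.cong refl) (auto simp: N_base[simplified])
  also have "\<dots> = 1" using c base by (simp add: sum.delta')
  finally show ?case by simp
next
  case (Suc n)
  have fin: "\<forall>i\<in>{1..Suc n}. finite (L i)" using Suc.prems by auto
  have finn: "finite (L n)" "finite (L (Suc n))" using Suc.prems Suc.hyps by auto
  have IH: "(m-1)^(n-1) \<le> (\<Sum>e\<in>L n. N_path n L c e)" using Suc by auto
  have "(\<Sum>d\<in>L (Suc n). N_path (Suc n) L c d) = (\<Sum>d\<in>L (Suc n). \<Sum>e\<in>L n - {d}. N_path n L c e)"
    using N_rec[OF Suc.hyps fin] by (intro sum.cong) auto
  also have "\<dots> = (\<Sum>d\<in>L (Suc n). \<Sum>e\<in>{e. e \<in> L n \<and> e \<noteq> d}. N_path n L c e)"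
    by (intro sum.cong) auto
  also have "\<dots> = (\<Sum>e\<in>L n. \<Sum>d\<in>{d. d \<in> L (Suc n) \<and> e \<noteq> d}. N_path n L c e)"
    by (rule sum.swap_restrict[OF finn(2) finn(1)])
  also have "\<dots> = (\<Sum>e\<in>L n. card (L (Suc n) - {e}) * N_path n L c e)"
    by (intro sum.cong) (auto intro!: arg_cong[where f=card])
  also have "\<dots> \<ge> (\<Sum>e\<in>L n. (m-1) * N_path n L c e)"
  proof (intro sum_mono mult_right_mono)
    fix e show "m - 1 \<le> card (L (Suc n) - {e})"
      using Suc.prems by (metis atLeastAtMost_iff card_Diff_singleton_if diff_le_self le_add1 order_refl plus_1_eq_Suc Suc.hyps le_SucI)
  qed auto
  finally have "(\<Sum>e\<in>L n. (m-1) * N_path n L c e) \<le> (\<Sum>d\<in>L (Suc n). N_path (Suc n) L c d)" .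
  moreover have "(\<Sum>e\<in>L n. (m-1) * N_path n L c e) = (m-1) * (\<Sum>e\<in>L n. N_path n L c e)"
    by (simp add: sum_distrib_left)
  moreover have "(m-1)^(Suc n - 1) \<le> (m-1) * (\<Sum>e\<in>L n. N_path n L c e)"
    using IH Suc.hyps by (cases n) (auto intro: mult_left_mono)
  ultimately show ?case by linarith
qed



lemma main_bound:
  assumes m: "m \<ge> 2" and L: "\<forall>i\<in>{1..2*j+1}. finite (L i) \<and> card (L i) = m"
    and c: "c \<in> L 1" and d: "d \<in> L (2*j+1)"
  shows "(m-1)^(2*j) \<le> m * N_path (2*j+1) L c d + 1"
  using L d
proof (induction j arbitrary: d)
  case 0
  then show ?case by simp
next
  case (Suc j)
  define n where "n = 2*j+1"
  have n1: "1 \<le> n" by (simp add: n_def)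
  have SS: "2 * Suc j + 1 = Suc (Suc n)" by (simp add: n_def)
  have Li: "finite (L i) \<and> card (L i) = m" if "i \<in> {1..Suc (Suc n)}" for i
    using Suc.prems(1) that SS by auto
  have IH: "(m-1)^(2*j) \<le> m * N_path n L c g + 1" if "g \<in> L n" for g
    using Suc.IH[of g] Suc.prems that by (auto simp: n_def)
  define T where "T = (\<Sum>g\<in>L n. N_path n L c g)"
  have Tb: "(m-1)^(2*j) \<le> T" unfolding T_def
    using T_bound[of n L m c] n1 c Li by (auto simp: n_def)
  define E where "E = L (Suc n) - {d}"
  define F where "F = E \<inter> L n"
  have finLn: "finite (L n)" "card (L n) = m" using Li[of n] n1 by auto
  have finLs: "finite (L (Suc n))" "card (L (Suc n)) = m" using Li[of "Suc n"] n1 by auto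
  have finE: "finite E" using finLs by (simp add: E_def)
  have dS: "d \<in> L (Suc (Suc n))" using Suc.prems SS by simp
  have finS: "\<forall>i\<in>{1..Suc n}. finite (L i)" using Li by auto
  have NT: "N_path n L c g \<le> T" if "g \<in> L n" for g
    unfolding T_def using finLn that by (intro member_le_sum) auto
  have "N_path (Suc (Suc n)) L c d = (\<Sum>e\<in>E. N_path (Suc n) L c e)"
    unfolding E_def by (rule N_rec) (use n1 Li dS in auto)
  also have "\<dots> = (\<Sum>e\<in>E. if e \<in> L n then T - N_path n L c e else T)"
  proof (intro sum.cong refl)
    fix e assume "e \<in> E"
    then have "e \<in> L (Suc n)" by (simp add: E_def)
    then have "N_path (Suc n) L c e = (\<Sum>g\<in>L n - {e}. N_path n L c g)"
      by (rule N_rec[OF n1 finS])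
    then show "N_path (Suc n) L c e = (if e \<in> L n then T - N_path n L c e else T)"
      by (simp add: sum_diff1_nat T_def)
  qed
  finally have N'def: "N_path (Suc (Suc n)) L c d = (\<Sum>e\<in>E. if e \<in> L n then T - N_path n L c e else T)" .
  have sF: "(\<Sum>e\<in>E. if e \<in> L n then N_path n L c e else 0) = (\<Sum>e\<in>F. N_path n L c e)"
    unfolding F_def using finE by (simp add: sum.If_cases)
  have key: "N_path (Suc (Suc n)) L c d + (\<Sum>e\<in>F. N_path n L c e) = card E * T"
  proof -
    have "N_path (Suc (Suc n)) L c d + (\<Sum>e\<in>F. N_path n L c e)
        = (\<Sum>e\<in>E. (if e \<in> L n then T - N_path n L c e else T) + (if e \<in> L n then N_path n L c e else 0))"
      by (simp add: N'def sF[symmetric] sum.distrib)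
    also have "\<dots> = (\<Sum>e\<in>E. T)" using NT by (intro sum.cong) auto
    finally show ?thesis by simp
  qed
  have finF: "finite F" "F \<subseteq> L n" "F \<subseteq> E" using finLn by (auto simp: F_def)
  obtain k where mk: "m = Suc (Suc k)" using m by (metis add_2_eq_Suc le_Suc_ex)
  define x where "x = (m-1)^(2*j)"
  define N' where "N' = N_path (Suc (Suc n)) L c d"
  have sq: "(m-1)^(2*Suc j) = (m*(m-2)+1) * x"
    unfolding x_def by (simp add: mk power_mult power2_eq_square algebra_simps)
  have cardE: "card E \<ge> m - 1" "card E \<le> m"
    using finLs by (auto simp: E_def card_Diff_singleton_if card_mono)
  have "m * N' + 1 \<ge> (m*(m-2)+1) * x"
  proof (cases "F = L n")
    case True
    then have "card F = m" using finLn by simp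
    then have "card E = m" using cardE card_mono[OF finE finF(3)] by simp
    then have "N' + T = m * T" using key True by (simp add: N'_def T_def)
    then have "N' = (m-1) * T" by (simp add: mk)
    then have "m * N' = m * (m-1) * T" by simp
    moreover have "m * (m-1) * x \<le> m * (m-1) * T" using Tb x_def by simp
    moreover have "(m*(m-2)+1) * x \<le> m * (m-1) * x"
      by (intro mult_right_mono) (auto simp: mk)
    ultimately show ?thesis by linarith
  next
    case False
    then obtain g0 where g0: "g0 \<in> L n" "g0 \<notin> F" using finF(2) by blast
    have "(\<Sum>e\<in>F. N_path n L c e) + N_path n L c g0 = (\<Sum>e\<in>insert g0 F. N_path n L c e)"
      using finF g0 by simp
    also have "\<dots> \<le> T" unfolding T_def using finLn finF g0 by (intro sum_mono2) auto
    finally have s1: "(\<Sum>e\<in>F. N_path n L c e) + N_path n L c g0 \<le> T" .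
    have "(m-1) * T \<le> card E * T" using cardE by simp
    then have "(m-1) * T \<le> N' + T - N_path n L c g0" using key s1 unfolding N'_def by linarith
    then have "(m-2) * T + N_path n L c g0 \<le> N'" using s1 by (simp add: mk)
    then have "m * ((m-2) * T + N_path n L c g0) \<le> m * N'" by simp
    moreover have "m * (m-2) * x \<le> m * (m-2) * T" using Tb x_def by simp
    moreover have "x \<le> m * N_path n L c g0 + 1" using IH[OF g0(1)] x_def by simp
    ultimately show ?thesis by (simp add: algebra_simps)
  qed
  then have "(m-1)^(2*Suc j) \<le> m * N' + 1" by (simp only: sq)
  then show ?case unfolding SS N'_def .
qed



theorem lemma20:
  fixes k m :: nat and L :: "nat \<Rightarrow> 'c set"
  assumes "m \<ge> 3"
    and "\<And>i. i \<in> {1..2*k+1} \<Longrightarrow> finite (L i) \<and> card (L i) = m"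
  shows "(\<forall>c \<in> L 1. \<forall>d \<in> L (2*k+1).
            (real (m-1) ^ (2*k+1) - real (m-1)) / (real m * real (m-1))
              \<le> real (N_path (2*k+1) L c d))
       \<and> (real (m-1) ^ (2*k+1) - real (m-1)) / (real m * real (m-1)) + 1
            = (real (m-1) ^ (2*k) + real (m-1)) / real m
       \<and> m \<le> card {(y, z) \<in> L 1 \<times> L (2*k+1).
                 (real (m-1) ^ (2*k) + real (m-1)) / real m
                   \<le> real (N_path (2*k+1) L y z)}"
proof -
  define n where "n = 2*k+1"
  define x where "x = (m-1)^(2*k)"
  have m2: "m \<ge> 2" using assms(1) by simp
  have Lall: "\<forall>i\<in>{1..2*k+1}. finite (L i) \<and> card (L i) = m" using assms(2) by blast
  have rm1: "real (m-1) = real m - 1" using m2 by simp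
  have mpos: "real m > 0" "real m - 1 > 0" using m2 by auto
  have xr: "real (m-1) ^ (2*k) = real x" by (simp add: x_def)
  have lhs: "(real (m-1) ^ (2*k+1) - real (m-1)) / (real m * real (m-1)) = (real x - 1) / real m"
    using mpos unfolding rm1 by (simp add: xr[unfolded rm1, symmetric] field_simps)
  have P1: "\<forall>c \<in> L 1. \<forall>d \<in> L (2*k+1).
            (real (m-1) ^ (2*k+1) - real (m-1)) / (real m * real (m-1))
              \<le> real (N_path (2*k+1) L c d)"
  proof (intro ballI)
    fix c d assume c: "c \<in> L 1" and d: "d \<in> L (2*k+1)"
    have "x \<le> m * N_path (2*k+1) L c d + 1" using main_bound[OF m2 Lall c d] x_def by simp
    then have "real x \<le> real m * real (N_path (2*k+1) L c d) + 1"
      by (metis of_nat_add of_nat_le_iff of_nat_mult of_nat_1)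
    then show "(real (m-1) ^ (2*k+1) - real (m-1)) / (real m * real (m-1))
              \<le> real (N_path (2*k+1) L c d)"
      unfolding lhs using mpos by (simp add: divide_le_eq algebra_simps)
  qed
  have P2: "(real (m-1) ^ (2*k+1) - real (m-1)) / (real m * real (m-1)) + 1
            = (real (m-1) ^ (2*k) + real (m-1)) / real m"
    unfolding lhs xr using mpos by (simp add: field_simps rm1)
  have xmod: "x mod m = 1"
  proof -
    obtain k' where mk: "m = Suc (Suc k')" using m2 by (metis add_2_eq_Suc le_Suc_ex)
    have "x = ((m-1)^2)^k" unfolding x_def by (simp add: power_mult)
    also have "(m-1)^2 = m*(m-2)+1" by (simp add: mk power2_eq_square)
    finally have "x = (m*(m-2)+1)^k" .
    then have "x mod m = ((m*(m-2)+1) mod m)^k mod m" by (simp add: power_mod)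
    also have "(m*(m-2)+1) mod m = 1 mod m" by (metis add.commute mod_mult_self2 mult.commute)
    also have "1 mod m = 1" using m2 by simp
    finally show ?thesis using m2 by simp
  qed
  obtain q where q: "x = m*q + 1" using xmod by (metis div_mult_mod_eq mult.commute)
  have ex: "\<exists>z\<in>L n. (real (m-1) ^ (2*k) + real (m-1)) / real m \<le> real (N_path n L y z)"
    if y: "y \<in> L 1" for y
  proof (rule ccontr)
    assume "\<not> ?thesis"
    then have lt0: "real (N_path n L y z) < (real (m-1) ^ (2*k) + real (m-1)) / real m" if "z \<in> L n" for z
      using that by (auto simp: not_le)
    have lt: "real (N_path n L y z) < (real x + (real m - 1)) / real m" if "z \<in> L n" for z
      using lt0[OF that] by (subst (asm) xr, subst (asm) rm1)
    have le: "N_path n L y z \<le> q" if "z \<in> L n" for z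
    proof -
      have "real (N_path n L y z) * real m < real m * real q + real m"
        using lt[OF that] mpos q by (simp add: field_simps)
      then have "real (N_path n L y z) < real q + 1" using mpos
        by (metis distrib_left mult.commute mult.right_neutral mult_less_cancel_left_pos)
      then show ?thesis by linarith
    qed
    have finLn: "finite (L n)" "card (L n) = m" using Lall n_def by auto
    have "x \<le> (\<Sum>z\<in>L n. N_path n L y z)" using T_bound[of n L m y] Lall y n_def x_def by simp
    also have "\<dots> \<le> (\<Sum>z\<in>L n. q)" using le by (intro sum_mono) auto
    also have "\<dots> = m * q" using finLn by simp
    finally show False using q by simp
  qed
  then obtain zf where zf: "\<And>y. y \<in> L 1 \<Longrightarrow> zf y \<in> L n \<and>
      (real (m-1) ^ (2*k) + real (m-1)) / real m \<le> real (N_path n L y (zf y))" by metis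
  have fin: "finite (L 1 \<times> L (2*k+1))" using Lall by auto
  have cL1: "card (L 1) = m" using Lall by auto
  have "m = card (L 1)" using cL1 by simp
  also have "\<dots> = card ((\<lambda>y. (y, zf y)) ` L 1)"
    by (simp add: card_image inj_on_def)
  also have "\<dots> \<le> card {(y, z) \<in> L 1 \<times> L (2*k+1).
                 (real (m-1) ^ (2*k) + real (m-1)) / real m
                   \<le> real (N_path (2*k+1) L y z)}"
    by (rule card_mono[OF rev_finite_subset[OF fin]]) (use zf n_def in auto)
  finally show ?thesis using P1 P2 by simp
qed

end
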